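(* For every $\alpha>-1$ and every $z>0$, $$|I_\alpha(z)-I_{\alpha+1}(z)|<(4\alpha+6)\frac{I_{\alpha+1}(z)}{z}.$$
   Context: $I_\alpha(z)=\sum_{k=0}^\infty\frac{(z/2)^{\alpha+2k}}{k!\,\Gamma(\alpha+k+1)}$ is the modified Bessel function of the first kind of order $\alpha>-1$. *)

theory Defs
  imports "HOL-Analysis.Analysis"
begin

definition besselI :: "real \<Rightarrow> real \<Rightarrow> real" where
  "besselI a z = (\<Sum>k. (z / 2) powr (a + 2 * real k) / (fact k * Gamma (a + real k + 1)))"

end

theory Submission
  imports Defs
begin

definition bt :: "real \<Rightarrow> real \<Rightarrow> nat \<Rightarrow> real" where
  "bt a z k = (z / 2) powr (a + 2 * real k) / (fact k * Gamma (a + real k + 1))"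

lemma besselI_bt: "besselI a z = suminf (bt a z)"
  unfolding besselI_def bt_def by simp

lemma Gamma_succ: "(s::real) > 0 \<Longrightarrow> Gamma (s + 1) = s * Gamma s"
  by (rule Gamma_plus1) (auto simp: nonpos_Ints_def)

lemma bt_pos: "a > -1 \<Longrightarrow> z > 0 \<Longrightarrow> bt a z k > 0"
  unfolding bt_def by (intro divide_pos_pos mult_pos_pos Gamma_real_pos) auto

lemma powr_step: "(x::real) > 0 \<Longrightarrow> x powr (a + 2 * real k) = x powr a * x ^ (2 * k)"
  by (simp add: powr_add powr_realpow[symmetric])

lemma bt_alt: "z > 0 \<Longrightarrow> bt a z k = (z/2) powr a * (z/2) ^ (2*k) / (fact k * Gamma (a + real k + 1))"
  unfolding bt_def by (simp add: powr_step)

lemma bt_Suc: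
  assumes "a > -1" "z > 0"
  shows "bt a z (Suc k) = bt a z k * ((z/2)^2 / ((real k + 1) * (a + real k + 1)))"
proof -
  define G where "G = Gamma (a + real k + 1)"
  define x where "x = z/2"
  define p where "p = x powr a"
  have G: "Gamma (a + real (Suc k) + 1) = (a + real k + 1) * G"
    using Gamma_succ[of "a + real k + 1"] assms by (simp add: add_ac G_def)
  have Gp: "G > 0" using assms by (auto simp: G_def)
  have f: "fact (Suc k) = (real k + 1) * fact k" by (simp add: algebra_simps)
  have fp: "(fact k :: real) > 0" by simp
  have "bt a z (Suc k) = p * x^(2*k) * x^2 / ((real k + 1) * fact k * ((a + real k + 1) * G))"
    unfolding bt_alt[OF assms(2)] G f p_def x_def[symmetric] by (simp add: power_add mult_ac power2_eq_square)
  also have "\<dots> = (p * x^(2*k) / (fact k * G)) * (x^2 / ((real k + 1) * (a + real k + 1)))"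
    using Gp fp assms by (simp add: divide_simps)
  finally show ?thesis unfolding bt_alt[OF assms(2)] p_def x_def G_def .
qed

lemma bt_shift1:
  assumes "a > -1" "z > 0"
  shows "bt (a + 1) z k = bt a z k * ((z/2) / (a + real k + 1))"
proof -
  define G where "G = Gamma (a + real k + 1)"
  define x where "x = z/2"
  define p where "p = x powr a"
  have G: "Gamma (a + 1 + real k + 1) = (a + real k + 1) * G"
    using Gamma_succ[of "a + real k + 1"] assms by (simp add: add_ac G_def)
  have Gp: "G > 0" using assms by (auto simp: G_def)
  have fp: "(fact k :: real) > 0" by simp
  have pp: "x powr (a + 1) = p * x" using assms by (simp add: powr_add p_def x_def)
  have "bt (a+1) z k = p * x * x^(2*k) / (fact k * ((a + real k + 1) * G))"
    unfolding bt_alt[OF assms(2)] G pp[unfolded x_def] by (simp add: x_def)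
  also have "\<dots> = (p * x^(2*k) / (fact k * G)) * (x / (a + real k + 1))"
    using Gp fp assms by (simp add: field_simps)
  finally show ?thesis unfolding bt_alt[OF assms(2)] p_def x_def G_def .
qed

lemma bt_shift2:
  assumes "a > -1" "z > 0"
  shows "bt (a + 2) z k = bt a z (Suc k) * ((real k + 1) / (a + real k + 2))"
proof -
  define G where "G = Gamma (a + real (Suc k) + 1)"
  define x where "x = z/2"
  define p where "p = x powr a"
  have G: "Gamma (a + 2 + real k + 1) = (a + real k + 2) * G"
    using Gamma_succ[of "a + real (Suc k) + 1"] assms by (simp add: add_ac G_def)
  have Gp: "G > 0" using assms by (auto simp: G_def)
  have f: "fact (Suc k) = (real k + 1) * fact k" by (simp add: algebra_simps)
  have fp: "(fact k :: real) > 0" by simp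
  have pp: "x powr (a + 2) = p * x^2" using assms by (simp add: powr_add p_def x_def)
  have ak: "a + real k + 2 > 0" using assms by simp
  have k1: "real k + 1 > 0" by simp
  have "bt (a+2) z k = p * x^2 * x^(2*k) / (fact k * ((a + real k + 2) * G))"
    unfolding bt_alt[OF assms(2)] G x_def[symmetric] pp by simp
  also have "\<dots> = (p * x^(2*k) * x^2 / ((real k + 1) * fact k * G)) * ((real k + 1) / (a + real k + 2))"
    using Gp fp ak k1 by (simp add: divide_simps)
  also have "p * x^(2*k) * x^2 / ((real k + 1) * fact k * G) = bt a z (Suc k)"
    unfolding bt_alt[OF assms(2)] f x_def[symmetric] p_def G_def
    by (simp add: power_add mult_ac power2_eq_square)
  finally show ?thesis .
qed

lemma bt_summable:
  assumes "a > -1" "z > 0"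
  shows "summable (bt a z)"
proof (rule summable_ratio_test[where c="1/2" and N="nat \<lceil>z\<rceil>"])
  fix n assume n: "nat \<lceil>z\<rceil> \<le> n"
  have nz: "real n \<ge> z" using n by linarith
  have pos: "a + real n + 1 > 0" using assms by simp
  have "(real n + 1) * (a + real n + 1) \<ge> z * z"
    using nz pos assms by (intro mult_mono) auto
  moreover have pp: "(real n + 1) * (a + real n + 1) > 0" using pos by simp
  ultimately have "z * z \<le> 2 * ((real n + 1) * (a + real n + 1))" by linarith
  hence le: "(z/2)^2 / ((real n + 1) * (a + real n + 1)) \<le> 1/2"
    using pp by (simp add: divide_simps power2_eq_square)
  have b: "bt a z n > 0" using bt_pos assms by auto
  have "bt a z (Suc n) = bt a z n * ((z/2)^2 / ((real n + 1) * (a + real n + 1)))"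
    by (rule bt_Suc[OF assms])
  also have "\<dots> \<le> bt a z n * (1/2)" using b le by (intro mult_left_mono) auto
  finally show "norm (bt a z (Suc n)) \<le> 1/2 * norm (bt a z n)"
    using b bt_pos[OF assms, of "Suc n"] by simp
qed simp

lemma besselI_pos: "a > -1 \<Longrightarrow> z > 0 \<Longrightarrow> besselI a z > 0"
  unfolding besselI_bt by (intro suminf_pos bt_summable bt_pos) auto

lemma besselI_rec:
  assumes "a > -1" "z > 0"
  shows "besselI a z = (a + 1) / (z/2) * besselI (a + 1) z + besselI (a + 2) z"
proof -
  define g where "g k = (if k = 0 then 0 else bt (a + 2) z (k - 1))" for k
  have a1: "a + 1 > -1" "a + 2 > -1" using assms by auto
  have gs: "(\<lambda>k. g (Suc k)) = bt (a + 2) z" by (simp add: g_def)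
  have sg: "summable g" using bt_summable[OF a1(2) assms(2)] gs summable_Suc_iff[of g] by simp
  have sumg: "suminf g = besselI (a + 2) z"
    using suminf_split_head[OF sg] gs by (simp add: g_def besselI_bt)
  have s1: "summable (\<lambda>k. (a + 1) / (z/2) * bt (a + 1) z k)"
    by (intro summable_mult bt_summable a1 assms)
  have eq: "bt a z k = (a + 1) / (z/2) * bt (a + 1) z k + g k" for k
  proof (cases k)
    case 0
    then show ?thesis using bt_shift1[OF assms, of 0] assms by (simp add: g_def field_simps)
  next
    case (Suc j)
    have p1: "a + real j + 2 > 0" using assms by simp
    have kk: "a + real k + 1 = a + real j + 2" using Suc by simp
    have e1: "(a + 1) / (z/2) * bt (a + 1) z k = bt a z k * ((a + 1) / (a + real j + 2))"
    proof -
      have "bt (a + 1) z k = bt a z k * ((z/2) / (a + real j + 2))"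
        using bt_shift1[OF assms, of k] unfolding kk .
      then show ?thesis using assms p1 by (simp add: field_simps)
    qed
    have e2: "g k = bt a z k * ((real j + 1) / (a + real j + 2))"
      using bt_shift2[OF assms, of j] Suc by (simp add: g_def)
    have "bt a z k * ((a + 1) / (a + real j + 2)) + bt a z k * ((real j + 1) / (a + real j + 2)) = bt a z k"
      using p1 by (simp add: divide_simps) (simp add: algebra_simps)
    then show ?thesis using e1 e2 by simp
  qed
  have "besselI a z = (\<Sum>k. (a + 1) / (z/2) * bt (a + 1) z k + g k)"
    unfolding besselI_bt by (rule arg_cong[where f=suminf]) (rule ext, rule eq)
  also have "\<dots> = (\<Sum>k. (a + 1) / (z/2) * bt (a + 1) z k) + suminf g"
    using suminf_add[OF s1 sg] by simp
  also have "\<dots> = (a + 1) / (z/2) * besselI (a + 1) z + besselI (a + 2) z"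
    using suminf_mult[OF bt_summable[OF a1(1) assms(2)], of "(a + 1) / (z/2)"] sumg
    by (simp only: besselI_bt)
  finally show ?thesis .
qed

lemma besselI_mono:
  assumes "a \<ge> 0" "z > 0"
  shows "besselI (a + 1) z < besselI a z"
proof -
  have a: "a > -1" using assms by simp
  have a1: "a + 1 > -1" using assms by simp
  have tm: "bt (a + 1) z k \<le> (bt a z k + bt a z (Suc k)) / 2" for k
  proof -
    define b where "b = bt a z k"
    define x where "x = z / 2"
    define m where "m = real k + 1"
    define n where "n = a + real k + 1"
    have bp: "b > 0" using bt_pos[OF a assms(2)] by (simp add: b_def)
    have mp: "m > 0" and mn: "m \<le> n" using assms by (auto simp: m_def n_def)
    have xp: "x > 0" using assms by (simp add: x_def)
    have "2 * x * m \<le> x^2 + m * m" using sum_squares_ge_zero[of "x - m" 0]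
      by (simp add: power2_eq_square algebra_simps)
    also have "\<dots> \<le> x^2 + m * n" using mp mn by (simp add: mult_left_mono)
    finally have key: "2 * x * m \<le> x^2 + m * n" .
    have "x / n \<le> (1 + x^2 / (m * n)) / 2"
      using key mp mn by (simp add: divide_simps)
    hence "b * (x / n) \<le> (b + b * (x^2 / (m * n))) / 2"
      using bp mult_left_mono[of "x / n" "(1 + x^2 / (m * n)) / 2" b]
      by (simp add: algebra_simps)
    then show ?thesis using bt_shift1[OF a assms(2), of k] bt_Suc[OF a assms(2), of k]
      by (simp add: b_def x_def m_def n_def)
  qed
  have s0: "summable (bt a z)" by (rule bt_summable[OF a assms(2)])
  have sS: "summable (\<lambda>k. bt a z (Suc k))" using s0 summable_Suc_iff by blast
  have s2: "summable (\<lambda>k. (bt a z k + bt a z (Suc k)) / 2)"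
    by (intro summable_divide summable_add s0 sS)
  have "besselI (a + 1) z \<le> (\<Sum>k. (bt a z k + bt a z (Suc k)) / 2)"
    unfolding besselI_bt by (intro suminf_le tm bt_summable[OF a1 assms(2)] s2)
  also have "\<dots> = (suminf (bt a z) + (suminf (bt a z) - bt a z 0)) / 2"
    using suminf_divide[OF summable_add[OF s0 sS], of 2] suminf_add[OF s0 sS]
      suminf_split_head[OF s0] by simp
  also have "\<dots> < besselI a z"
    using bt_pos[OF a assms(2), of 0] by (simp add: besselI_bt)
  finally show ?thesis .
qed

lemma final_arith:
  fixes I0 I1 I2 I3 u v1 v2 :: real
  assumes "I0 = u + I2" "I1 = v2 + I3" "I2 < I1" "I3 < I2" "0 \<le> u" "v2 \<le> v1" "0 \<le> v1"
  shows "\<bar>I0 - I1\<bar> < u + v1"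
  using assms by linarith

theorem mainTheorem12:
  fixes \<alpha> z :: real
  assumes "\<alpha> > -1" and "z > 0"
  shows "\<bar>besselI \<alpha> z - besselI (\<alpha> + 1) z\<bar> < (4 * \<alpha> + 6) * besselI (\<alpha> + 1) z / z"
proof -
  define x where "x = z / 2"
  have xp: "x > 0" using assms by (simp add: x_def)
  define I0 where "I0 = besselI \<alpha> z"
  define I1 where "I1 = besselI (\<alpha> + 1) z"
  define I2 where "I2 = besselI (\<alpha> + 2) z"
  define I3 where "I3 = besselI (\<alpha> + 3) z"
  have R1: "I0 = (\<alpha> + 1) / x * I1 + I2"
    using besselI_rec[OF assms] by (simp add: I0_def I1_def I2_def x_def)
  have R2: "I1 = (\<alpha> + 2) / x * I2 + I3"
    using besselI_rec[of "\<alpha> + 1" z] assms by (simp add: I3_def I1_def I2_def x_def add_ac)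
  have M1: "I2 < I1"
    using besselI_mono[of "\<alpha> + 1" z] assms by (simp add: I1_def I2_def add_ac)
  have M2: "I3 < I2"
    using besselI_mono[of "\<alpha> + 2" z] assms by (simp add: I3_def I2_def add_ac)
  have P1: "I1 > 0" using besselI_pos[of "\<alpha> + 1" z] assms by (simp add: I1_def)
  have c1: "(\<alpha> + 1) / x * I1 \<ge> 0" using P1 xp assms by simp
  have c2: "(\<alpha> + 2) / x * I1 \<ge> 0" using P1 xp assms by simp
  have c3: "(\<alpha> + 2) / x * I2 \<le> (\<alpha> + 2) / x * I1"
    using M1 xp assms by (intro mult_left_mono) auto
  have rhs: "(4 * \<alpha> + 6) * I1 / z = (\<alpha> + 1) / x * I1 + (\<alpha> + 2) / x * I1"
    using xp by (simp add: x_def field_simps)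
  have "\<bar>I0 - I1\<bar> < (4 * \<alpha> + 6) * I1 / z"
    unfolding rhs by (rule final_arith[OF R1 R2 M1 M2 c1 c3 c2])
  then show ?thesis by (simp add: I0_def I1_def)
qed

end
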